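(* Let $I\subseteq\mathbb{R}_+$ be a nonempty, non-singleton interval, let $n\in\mathbb{N}$, and let $\Phi: I\to\mathbb{R}_+$ be subadditive of order $n$. Then the function $t\mapsto \frac{\Phi(t)}{t^n}$ is subadditive on $I\cap\,]0,\infty[$, i.e. $\frac{\Phi(x+y)}{(x+y)^n}\leq\frac{\Phi(x)}{x^n}+\frac{\Phi(y)}{y^n}$ for all $x,y\in I\cap\,]0,\infty[$ with $x+y\in I$.
   Context: $\mathbb{R}_+$ denotes the set of nonnegative real numbers. For $n\in\mathbb{N}$, a function $\Phi: I\to\mathbb{R}_+$ is called subadditive of order $n$ if for all $x,y\in I$ with $y>0$ and $x+y\in I$ one has $\Phi(x+y)\leq \Phi(x)+\frac{(x+y)^n-x^n}{y^n}\Phi(y)$. *)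

theory Defs
  imports "HOL-Analysis.Analysis"
begin

definition subadditive_of_order :: "nat \<Rightarrow> real set \<Rightarrow> (real \<Rightarrow> real) \<Rightarrow> bool" where
  "subadditive_of_order n I \<Phi> \<longleftrightarrow>
     (\<forall>x\<in>I. \<Phi> x \<ge> 0) \<and>
     (\<forall>x\<in>I. \<forall>y\<in>I. y > 0 \<longrightarrow> x + y \<in> I \<longrightarrow>
        \<Phi> (x + y) \<le> \<Phi> x + ((x + y) ^ n - x ^ n) / y ^ n * \<Phi> y)"

end

theory Submission
  imports Defs
begin

theorem theorem2p4:
  fixes I :: "real set" and n :: nat and \<Phi> :: "real \<Rightarrow> real"
  assumes "is_interval I" and "I \<subseteq> {0..}"
    and "\<exists>a\<in>I. \<exists>b\<in>I. a \<noteq> b"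
    and "subadditive_of_order n I \<Phi>"
  shows "\<forall>x\<in>I \<inter> {0<..}. \<forall>y\<in>I \<inter> {0<..}. x + y \<in> I \<longrightarrow>
           \<Phi> (x + y) / (x + y) ^ n \<le> \<Phi> x / x ^ n + \<Phi> y / y ^ n"
proof (intro ballI impI)
  fix x y assume x: "x \<in> I \<inter> {0<..}" and y: "y \<in> I \<inter> {0<..}" and xy: "x + y \<in> I"
  have px: "x > 0" and py: "y > 0" using x y by auto
  have fx: "\<Phi> x \<ge> 0" and fy: "\<Phi> y \<ge> 0" using assms(4) x y
    unfolding subadditive_of_order_def by auto
  have H: "\<Phi> (x + y) \<le> \<Phi> x + ((x + y) ^ n - x ^ n) / y ^ n * \<Phi> y"
    using assms(4) x y xy py unfolding subadditive_of_order_def by auto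
  define s where "s = (x + y) ^ n"
  define a where "a = x ^ n"
  define b where "b = y ^ n"
  have sp: "s > 0" using px py unfolding s_def by simp
  have ap: "a > 0" using px unfolding a_def by simp
  have bp: "b > 0" using py unfolding b_def by simp
  have as: "a \<le> s" unfolding a_def s_def using px py by (intro power_mono) auto
  have "\<Phi> (x + y) / s \<le> (\<Phi> x + (s - a) / b * \<Phi> y) / s"
    using H sp unfolding s_def a_def b_def by (simp add: divide_right_mono)
  also have "\<dots> = \<Phi> x / s + ((s - a) / s) * (\<Phi> y / b)"
    using sp bp by (simp add: field_simps)
  also have "\<Phi> x / s \<le> \<Phi> x / a" using fx ap as by (simp add: frac_le)
  also have "((s - a) / s) * (\<Phi> y / b) \<le> 1 * (\<Phi> y / b)"
    using sp ap fy bp by (intro mult_right_mono) auto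
  finally show "\<Phi> (x + y) / (x + y) ^ n \<le> \<Phi> x / x ^ n + \<Phi> y / y ^ n"
    unfolding s_def a_def b_def by simp
qed

end
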